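(* A Borel subset $B\subseteq\mathbb{Z}^\omega$ is Haar null if and only if there exists a sequence of positive integers $(a(n))_{n\in\omega}$ such that $\mu_a(B+x)=0$ for every $x\in\mathbb{Z}^\omega$.
   Context: $\mathbb{Z}^\omega$ is the group of integer sequences under coordinatewise addition with the product of discrete topologies. If $G$ is a Polish group, a set $A\subseteq G$ is called Haar null if there exist a Borel set $B\supseteq A$ and a Borel probability measure $\mu$ on $G$ such that $\mu(gBh)=0$ for every $g,h\in G$. For a positive integer $k$, $\varrho_k$ is the uniform probability measure on $\llbracket 0,k\rrbracket=[0,k]\cap\mathbb{Z}$, i.e. the measure on $\mathbb{Z}$ given by $\varrho_k(X)=\frac{|X\cap\llbracket 0,k\rrbracket|}{k+1}$. For a sequence $(a(n))_{n\in\omega}$ of positive integers, $\mu_a$ is the product Borel probability measure $\bigotimes_{n\in\omega}\varrho_{a(n)}$ on $\mathbb{Z}^\omega$. *)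

theory Defs
  imports "HOL-Probability.Probability"
begin

text \<open>The group Z^omega is the type nat => int, with coordinatewise addition and the
product topology of the discrete topologies on int (the standard topology on int is discrete,
and nat => 'b carries the product topology from Function_Topology).\<close>

definition zadd :: "(nat \<Rightarrow> int) \<Rightarrow> (nat \<Rightarrow> int) \<Rightarrow> (nat \<Rightarrow> int)" where
  "zadd x y = (\<lambda>n. x n + y n)"

definition haar_null :: "(nat \<Rightarrow> int) set \<Rightarrow> bool" where
  "haar_null A \<longleftrightarrow> (\<exists>B \<in> sets borel. A \<subseteq> B \<and>
     (\<exists>\<mu>::(nat \<Rightarrow> int) measure. prob_space \<mu> \<and> sets \<mu> = sets borel \<and>
        (\<forall>g h. emeasure \<mu> ((\<lambda>b. zadd (zadd g b) h) ` B) = 0)))"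

definition rho :: "int \<Rightarrow> int measure" where
  "rho k = measure_pmf (pmf_of_set {0..k})"

definition mu :: "(nat \<Rightarrow> int) \<Rightarrow> (nat \<Rightarrow> int) measure" where
  "mu a = (\<Pi>\<^sub>M n\<in>UNIV. rho (a n))"

end

theory Submission
  imports Defs
begin



instance int :: second_countable_topology
proof
  show "\<exists>B::int set set. countable B \<and> open = generate_topology B"
    by (intro exI[of _ "range lessThan \<union> range greaterThan"]) (auto simp: open_int_def)
qed

abbreviation M0 :: "(nat \<Rightarrow> int) measure" where
  "M0 \<equiv> Pi\<^sub>M UNIV (\<lambda>_::nat. count_space (UNIV::int set))"

lemma space_M0[simp]: "space M0 = UNIV"
  by (simp add: space_PiM)

lemma sets_borel_M0: "sets (borel :: (nat \<Rightarrow> int) measure) = sets M0"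
proof -
  have "sets M0 = sets (Pi\<^sub>M UNIV (\<lambda>_::nat. (borel::int measure)))"
    by (rule sets_PiM_cong) (auto simp: sets_borel_eq_count_space)
  moreover have "sets (Pi\<^sub>M UNIV (\<lambda>_::nat. (borel::int measure))) = sets (borel :: (nat \<Rightarrow> int) measure)"
    by (rule sets_PiM_equal_borel)
  ultimately show ?thesis by metis
qed

lemma sets_mu: "sets (mu a) = sets M0"
  unfolding mu_def rho_def by (rule sets_PiM_cong) auto

lemma space_mu[simp]: "space (mu a) = UNIV"
  unfolding mu_def rho_def by (simp add: space_PiM)

lemma prob_mu: "prob_space (mu a)"
  unfolding mu_def rho_def by (rule prob_space_PiM) (simp add: prob_space_measure_pmf)

lemma meas_coord: "(\<lambda>z. f (z n)) \<in> measurable M0 (count_space UNIV)"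
  by (rule measurable_compose[OF measurable_component_singleton]) auto

lemma sets_coord: "{z. P (z n)} \<in> sets M0"
proof -
  have "(\<lambda>z. z n) -` {x. P x} \<inter> space M0 \<in> sets M0"
    by (rule measurable_sets[OF measurable_component_singleton]) auto
  then show ?thesis by (simp add: vimage_def)
qed

lemma sets_allcoord: "{z. \<forall>n. P n (z n)} \<in> sets M0"
proof -
  have "(\<Inter>n. {z. P n (z n)}) \<in> sets M0" using sets_coord by blast
  moreover have "(\<Inter>n. {z. P n (z n)}) = {z. \<forall>n. P n (z n)}" by auto
  ultimately show ?thesis by simp
qed

lemma meas_transl: "(\<lambda>z. zadd z x) \<in> measurable M0 M0"
  unfolding zadd_def
  by (rule measurable_PiM_single') (auto intro!: measurable_compose[OF measurable_component_singleton])

lemma img_transl: "(\<lambda>b. zadd b x) ` B = (\<lambda>z. zadd z (\<lambda>n. - x n)) -` B"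
proof (intro set_eqI iffI)
  fix z assume "z \<in> (\<lambda>b. zadd b x) ` B"
  then obtain b where "b \<in> B" "z = zadd b x" by auto
  then show "z \<in> (\<lambda>z. zadd z (\<lambda>n. - x n)) -` B" by (simp add: zadd_def)
next
  fix z assume "z \<in> (\<lambda>z. zadd z (\<lambda>n. - x n)) -` B"
  then have "zadd z (\<lambda>n. - x n) \<in> B" by simp
  moreover have "z = zadd (zadd z (\<lambda>n. - x n)) x" by (simp add: zadd_def)
  ultimately show "z \<in> (\<lambda>b. zadd b x) ` B" by blast
qed

lemma sets_img: "B \<in> sets M0 \<Longrightarrow> (\<lambda>b. zadd b x) ` B \<in> sets M0"
  unfolding img_transl using measurable_sets[OF meas_transl] by (metis Int_UNIV_right space_M0)

definition phi :: "int \<Rightarrow> int \<Rightarrow> int \<Rightarrow> int" where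
  "phi s a k = (if 0 \<le> k \<and> k \<le> a then (k + s) mod (a + 1) else k)"

lemma phi_range: "0 \<le> a \<Longrightarrow> 0 \<le> k \<Longrightarrow> k \<le> a \<Longrightarrow> 0 \<le> phi s a k \<and> phi s a k \<le> a"
  unfolding phi_def using pos_mod_bound[of "a+1" "k+s"] by auto

lemma phi_inj: assumes "0 \<le> a" shows "inj_on (phi s a) {0..a}"
proof
  fix k l assume k: "k \<in> {0..a}" and l: "l \<in> {0..a}" and e: "phi s a k = phi s a l"
  then have "(k + s) mod (a+1) = (l + s) mod (a+1)" unfolding phi_def by auto
  then have "(a+1) dvd ((k+s) - (l+s))" by (simp add: mod_eq_dvd_iff)
  then have d: "(a+1) dvd (k - l)" by simp
  have "\<bar>k - l\<bar> < a + 1" using k l by auto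
  from d obtain q where q: "k - l = (a+1)*q" by (auto simp: dvd_def)
  have "q = 0"
  proof (rule ccontr)
    assume "q \<noteq> 0" then have "1 \<le> \<bar>q\<bar>" by simp
    then have "(a+1)*1 \<le> (a+1)*\<bar>q\<bar>" using assms by (intro mult_left_mono) auto
    then have "a+1 \<le> \<bar>k-l\<bar>" using q assms by (simp add: abs_mult)
    with \<open>\<bar>k - l\<bar> < a + 1\<close> show False by simp
  qed
  then show "k = l" using q by simp
qed

lemma phi_img: assumes "0 \<le> a" shows "phi s a ` {0..a} = {0..a}"
  by (rule endo_inj_surj) (use phi_range assms phi_inj in auto)

lemma phi_shift: "0 \<le> k \<Longrightarrow> k \<le> a \<Longrightarrow> 0 \<le> k + s \<Longrightarrow> k + s \<le> a \<Longrightarrow> phi s a k = k + s"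
  unfolding phi_def by auto

lemma phi_preserves: assumes "0 \<le> a" shows "emeasure (rho a) (phi s a -` F) = emeasure (rho a) F"
proof -
  have "map_pmf (phi s a) (pmf_of_set {0..a}) = pmf_of_set (phi s a ` {0..a})"
    by (rule map_pmf_of_set_inj) (use phi_inj assms in auto)
  then have "map_pmf (phi s a) (pmf_of_set {0..a}) = pmf_of_set {0..a}"
    using phi_img[OF assms] by simp
  then have "emeasure (map_pmf (phi s a) (pmf_of_set {0..a})) F = emeasure (rho a) F"
    unfolding rho_def by simp
  then show ?thesis unfolding rho_def by simp
qed



definition Sset :: "(nat \<Rightarrow> int) \<Rightarrow> (nat \<Rightarrow> int) \<Rightarrow> (nat \<Rightarrow> int) set" where
  "Sset c a = {z. \<forall>n. c n \<le> z n \<and> z n \<le> a n - c n}"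

lemma prod_emb_UNIV: "x \<in> prod_emb UNIV (\<lambda>n. rho (a n)) J (Pi\<^sub>E J F) \<longleftrightarrow> (\<forall>j\<in>J. x j \<in> F j)"
  by (auto simp: prod_emb_iff PiE_iff rho_def)

lemma meas_mu_M0: "f \<in> measurable M0 M0 \<Longrightarrow> f \<in> measurable (mu a) (mu b)"
  using sets_mu measurable_cong_sets by metis

lemma shift:
  fixes a c s :: "nat \<Rightarrow> int"
  assumes a: "\<And>n. 0 \<le> a n" and cs: "\<And>n. \<bar>s n\<bar> \<le> c n" and A: "A \<in> sets M0"
    and AS: "A \<subseteq> Sset c a"
  shows "emeasure (mu a) ((\<lambda>z. zadd z s) ` A) = emeasure (mu a) A"
proof -
  define Phi where "Phi = (\<lambda>(z::nat\<Rightarrow>int) n. phi (s n) (a n) (z n))"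
  have PhiM0: "Phi \<in> measurable M0 M0"
    unfolding Phi_def
    by (rule measurable_PiM_single') (auto intro!: measurable_compose[OF measurable_component_singleton])
  have PhiM: "Phi \<in> measurable (mu a) (mu a)" by (rule meas_mu_M0[OF PhiM0])
  have pr: "\<And>n. prob_space (rho (a n))" by (simp add: rho_def prob_space_measure_pmf)
  have D: "mu a = distr (mu a) (mu a) Phi"
  proof (rule measure_eqI_PiM_infinite[where I=UNIV and M="\<lambda>n. rho (a n)"])
    show "sets (mu a) = sets (Pi\<^sub>M UNIV (\<lambda>n. rho (a n)))" by (simp add: mu_def)
    show "sets (distr (mu a) (mu a) Phi) = sets (Pi\<^sub>M UNIV (\<lambda>n. rho (a n)))" by (simp add: mu_def)
    show "finite_measure (mu a)" using prob_mu prob_space.finite_measure by blast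
    fix F J assume J: "finite J" "J \<subseteq> (UNIV::nat set)" and F: "\<And>i. i \<in> J \<Longrightarrow> F i \<in> sets (rho (a i))"
    let ?X = "prod_emb UNIV (\<lambda>n. rho (a n)) J (Pi\<^sub>E J F)"
    have X: "?X \<in> sets (mu a)" unfolding mu_def using J F by (intro sets_PiM_I) auto
    have pre: "Phi -` ?X \<inter> space (mu a) = prod_emb UNIV (\<lambda>n. rho (a n)) J (Pi\<^sub>E J (\<lambda>j. phi (s j) (a j) -` F j))"
      by (auto simp: prod_emb_UNIV Phi_def)
    have "emeasure (distr (mu a) (mu a) Phi) ?X = emeasure (mu a) (Phi -` ?X \<inter> space (mu a))"
      by (rule emeasure_distr[OF PhiM X])
    also have "\<dots> = (\<Prod>j\<in>J. emeasure (rho (a j)) (phi (s j) (a j) -` F j))"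
      apply (subst pre) unfolding mu_def by (rule emeasure_PiM_emb) (use pr J in \<open>auto simp: rho_def\<close>)
    also have "\<dots> = (\<Prod>j\<in>J. emeasure (rho (a j)) (F j))"
      using phi_preserves a by simp
    also have "\<dots> = emeasure (mu a) ?X"
      unfolding mu_def by (rule emeasure_PiM_emb[symmetric]) (use pr J F in auto)
    finally show "emeasure (mu a) ?X = emeasure (distr (mu a) (mu a) Phi) ?X" by simp
  qed
  have img: "(\<lambda>z. zadd z s) ` A \<in> sets (mu a)" using sets_img[OF A] sets_mu by simp
  have sh: "Phi w = zadd w s" if "w \<in> A" for w
  proof -
    have "phi (s n) (a n) (w n) = w n + s n" for n
    proof -
      have "c n \<le> w n \<and> w n \<le> a n - c n" using AS that by (auto simp: Sset_def)
      moreover have "\<bar>s n\<bar> \<le> c n" by (rule cs)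
      ultimately show ?thesis by (intro phi_shift) auto
    qed
    then show ?thesis by (auto simp: Phi_def zadd_def)
  qed
  have pre: "Phi -` ((\<lambda>z. zadd z s) ` A) \<inter> space (mu a) = A"
  proof (intro equalityI subsetI)
    fix z assume "z \<in> Phi -` ((\<lambda>z. zadd z s) ` A) \<inter> space (mu a)"
    then obtain w where w: "w \<in> A" and e: "Phi z = zadd w s" by auto
    have "Phi z = Phi w" using e sh[OF w] by simp
    have "z n = w n" for n
    proof -
      have pe: "phi (s n) (a n) (z n) = phi (s n) (a n) (w n)"
        using \<open>Phi z = Phi w\<close> unfolding Phi_def by meson
      have "c n \<le> w n \<and> w n \<le> a n - c n" using AS w by (auto simp: Sset_def)
      then have wn: "w n \<in> {0..a n}" using cs[of n] by auto
      have wr: "0 \<le> phi (s n) (a n) (w n) \<and> phi (s n) (a n) (w n) \<le> a n"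
        using phi_range[of "a n" "w n" "s n"] wn by auto
      have zn: "z n \<in> {0..a n}"
      proof (rule ccontr)
        assume "z n \<notin> {0..a n}"
        then have "phi (s n) (a n) (z n) = z n" unfolding phi_def by auto
        with pe wr \<open>z n \<notin> {0..a n}\<close> show False by auto
      qed
      show ?thesis using inj_onD[OF phi_inj[OF a[of n]] pe zn wn] .
    qed
    then show "z \<in> A" using w by (metis ext)
  next
    fix z assume "z \<in> A" then show "z \<in> Phi -` ((\<lambda>z. zadd z s) ` A) \<inter> space (mu a)"
      using sh by auto
  qed
  have "emeasure (mu a) ((\<lambda>z. zadd z s) ` A) = emeasure (distr (mu a) (mu a) Phi) ((\<lambda>z. zadd z s) ` A)"
    using D by simp
  also have "\<dots> = emeasure (mu a) A"
    apply (subst emeasure_distr[OF PhiM img]) apply (subst pre) by (rule refl)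
  finally show ?thesis .
qed



lemma tight:
  fixes \<mu> :: "(nat \<Rightarrow> int) measure"
  assumes P: "prob_space \<mu>" and S: "sets \<mu> = sets M0"
  shows "\<exists>c. (\<forall>n. 0 \<le> c n) \<and> emeasure \<mu> {y. \<forall>n. \<bar>y n\<bar> \<le> c n} > 0"
proof -
  interpret prob_space \<mu> by (rule P)
  have "\<exists>k::nat. measure \<mu> {y. \<bar>y n\<bar> > int k} < (1/2)^(Suc (Suc n))" for n
  proof -
    let ?D = "\<lambda>k::nat. {y::nat\<Rightarrow>int. \<bar>y n\<bar> > int k}"
    have r: "range ?D \<subseteq> sets \<mu>" using sets_coord S by auto
    have d: "decseq ?D" by (auto simp: decseq_def)
    have e: "(\<Inter>k. ?D k) = {}"
    proof -
      have "y \<notin> ?D (nat \<bar>y n\<bar>)" for y by auto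
      then show ?thesis by blast
    qed
    have "(\<lambda>k. measure \<mu> (?D k)) \<longlonglongrightarrow> measure \<mu> (\<Inter>k. ?D k)"
      by (rule finite_Lim_measure_decseq[OF r d])
    then have "(\<lambda>k. measure \<mu> (?D k)) \<longlonglongrightarrow> 0" using e by simp
    then have "eventually (\<lambda>k. measure \<mu> (?D k) < (1/2)^(Suc (Suc n))) sequentially"
      by (rule order_tendstoD) simp
    then show ?thesis by (meson eventually_sequentially order_refl)
  qed
  then obtain k where k: "\<And>n. measure \<mu> {y. \<bar>y n\<bar> > int (k n)} < (1/2)^(Suc (Suc n))" by metis
  define c where "c n = int (k n)" for n
  let ?A = "\<lambda>n. {y::nat\<Rightarrow>int. \<bar>y n\<bar> > c n}"
  have Ar: "range ?A \<subseteq> sets \<mu>" using sets_coord S by auto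
  have g: "summable (\<lambda>n. (1/2::real)^(Suc (Suc n)))" by simp
  have sA: "summable (\<lambda>n. measure \<mu> (?A n))"
    by (rule summable_comparison_test'[OF g, of 0]) (use k in \<open>auto simp: c_def less_imp_le\<close>)
  have "measure \<mu> (\<Union>n. ?A n) \<le> (\<Sum>n. measure \<mu> (?A n))"
    by (rule finite_measure_subadditive_countably[OF Ar sA])
  also have "\<dots> \<le> (\<Sum>n. (1/2::real)^(Suc (Suc n)))"
    by (rule suminf_le[OF _ sA g]) (use k in \<open>auto simp: c_def less_imp_le\<close>)
  also have "\<dots> = 1/2"
  proof -
    have "(\<Sum>n. (1/2::real)^(Suc (Suc n))) = (\<Sum>n. (1/4) * (1/2::real)^n)" by (simp add: power_Suc)
    also have "\<dots> = (1/4) * (\<Sum>n. (1/2::real)^n)" by (rule suminf_mult) simp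
    also have "\<dots> = 1/2" by (simp add: suminf_geometric)
    finally show ?thesis .
  qed
  finally have U: "measure \<mu> (\<Union>n. ?A n) \<le> 1/2" .
  have Um: "(\<Union>n. ?A n) \<in> sets \<mu>" using Ar by auto
  have K: "{y. \<forall>n. \<bar>y n\<bar> \<le> c n} = space \<mu> - (\<Union>n. ?A n)"
    using sets_eq_imp_space_eq[OF S] by auto (meson not_less)+
  have "measure \<mu> (space \<mu> - (\<Union>n. ?A n)) = 1 - measure \<mu> (\<Union>n. ?A n)"
    by (rule prob_compl[OF Um])
  then have "measure \<mu> {y. \<forall>n. \<bar>y n\<bar> \<le> c n} > 0" using U K by simp
  then have "emeasure \<mu> {y. \<forall>n. \<bar>y n\<bar> \<le> c n} > 0" by (simp add: emeasure_eq_measure)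
  moreover have "\<forall>n. 0 \<le> c n" by (simp add: c_def)
  ultimately show ?thesis by blast
qed

lemma sets_bc: "sets (borel::int measure) = sets (count_space UNIV)"
  by (auto simp: sets_borel_eq_count_space)

lemma add_meas:
  assumes S1: "sets M1 = sets M0" and S2: "sets M2 = sets M0"
  shows "(\<lambda>p. zadd (fst p) (snd p)) \<in> measurable (M1 \<Otimes>\<^sub>M M2) M0"
  unfolding zadd_def
proof (rule measurable_PiM_single')
  fix n
  have c0: "(\<lambda>y::nat\<Rightarrow>int. y n) \<in> measurable M0 (count_space UNIV)"
    by (rule measurable_component_singleton) simp
  have c1: "(\<lambda>y::nat\<Rightarrow>int. y n) \<in> borel_measurable M1"
    using c0 measurable_cong_sets[OF S1 sets_bc] by simp
  have c2: "(\<lambda>y::nat\<Rightarrow>int. y n) \<in> borel_measurable M2"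
    using c0 measurable_cong_sets[OF S2 sets_bc] by simp
  have "(\<lambda>p. fst p n + snd p n) \<in> borel_measurable (M1 \<Otimes>\<^sub>M M2)"
    using c1 c2 by measurable
  then show "(\<lambda>p. fst p n + snd p n) \<in> measurable (M1 \<Otimes>\<^sub>M M2) (count_space UNIV)"
    using measurable_cong_sets[OF refl sets_bc, of "M1 \<Otimes>\<^sub>M M2"] by blast
qed auto

lemma fub:
  fixes \<mu> :: "(nat \<Rightarrow> int) measure"
  assumes P: "prob_space \<mu>" and S: "sets \<mu> = sets M0" and C: "C \<in> sets M0"
    and N: "\<And>x. emeasure \<mu> ((\<lambda>b. zadd b x) ` C) = 0"
  shows "AE y in \<mu>. emeasure (mu a) {z. zadd y z \<in> C} = 0"
proof -
  interpret m1: prob_space \<mu> by (rule P)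
  interpret m2: prob_space "mu a" by (rule prob_mu)
  interpret PP: pair_sigma_finite \<mu> "mu a" by unfold_locales
  have sp: "space \<mu> = UNIV" using sets_eq_imp_space_eq[OF S] by simp
  define G where "G = (\<lambda>p. zadd (fst p) (snd p)) -` C \<inter> space (\<mu> \<Otimes>\<^sub>M mu a)"
  have G: "G \<in> sets (\<mu> \<Otimes>\<^sub>M mu a)"
    unfolding G_def by (rule measurable_sets[OF add_meas[OF S sets_mu] C])
  have sl1: "(\<lambda>x. (x, y)) -` G = (\<lambda>b. zadd b (\<lambda>n. - y n)) ` C" for y
    by (auto simp: G_def space_pair_measure sp img_transl)
  have "emeasure (\<mu> \<Otimes>\<^sub>M mu a) G = (\<integral>\<^sup>+y. emeasure \<mu> ((\<lambda>x. (x, y)) -` G) \<partial>mu a)"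
    by (rule PP.emeasure_pair_measure_alt2[OF G])
  also have "\<dots> = 0" by (simp add: sl1 N)
  finally have G0: "emeasure (\<mu> \<Otimes>\<^sub>M mu a) G = 0" .
  have "emeasure (\<mu> \<Otimes>\<^sub>M mu a) G = (\<integral>\<^sup>+x. emeasure (mu a) (Pair x -` G) \<partial>\<mu>)"
    by (rule m2.emeasure_pair_measure_alt[OF G])
  then have "(\<integral>\<^sup>+x. emeasure (mu a) (Pair x -` G) \<partial>\<mu>) = 0" using G0 by simp
  then have "AE x in \<mu>. emeasure (mu a) (Pair x -` G) = 0"
    by (subst (asm) nn_integral_0_iff_AE[OF PP.measurable_emeasure_Pair1[OF G]]) simp
  moreover have "Pair x -` G = {z. zadd x z \<in> C}" for x
    by (auto simp: G_def space_pair_measure sp)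
  ultimately show ?thesis by simp
qed

lemma coord_emeasure:
  assumes "0 \<le> a n"
  shows "emeasure (mu a) {z. z n \<in> X} = card ({0..a n} \<inter> X) / card {0..a n}"
proof -
  have pr: "\<And>n. prob_space (rho (a n))" by (simp add: rho_def prob_space_measure_pmf)
  have "{z. z n \<in> X} = prod_emb UNIV (\<lambda>n. rho (a n)) {n} (Pi\<^sub>E {n} (\<lambda>_. X))"
    by (auto simp: prod_emb_UNIV)
  then have "emeasure (mu a) {z. z n \<in> X} = (\<Prod>j\<in>{n}. emeasure (rho (a j)) X)"
    unfolding mu_def by (simp only:) (rule emeasure_PiM_emb, use pr in \<open>auto simp: rho_def\<close>)
  also have "\<dots> = emeasure (rho (a n)) X" by simp
  also have "\<dots> = card ({0..a n} \<inter> X) / card {0..a n}"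
    unfolding rho_def by (rule emeasure_pmf_of_set) (use assms in auto)
  finally show ?thesis .
qed



lemma zadd_comm: "zadd x y = zadd y x"
  by (simp add: zadd_def add.commute)

lemma Tfin: "finite {t::nat\<Rightarrow>int. (\<forall>n\<ge>N. t n = 0) \<and> (\<forall>n. \<bar>t n\<bar> \<le> c n)}"
proof -
  have "{t::nat\<Rightarrow>int. (\<forall>n\<ge>N. t n = 0) \<and> (\<forall>n. \<bar>t n\<bar> \<le> c n)}
      \<subseteq> (\<lambda>f n. if n < N then f n else 0) ` (Pi\<^sub>E {..<N} (\<lambda>n. {-c n..c n}))"
  proof
    fix t assume t: "t \<in> {t::nat\<Rightarrow>int. (\<forall>n\<ge>N. t n = 0) \<and> (\<forall>n. \<bar>t n\<bar> \<le> c n)}"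
    have "t = (\<lambda>n. if n < N then restrict t {..<N} n else 0)"
      using t by (auto simp: fun_eq_iff)
    moreover have "restrict t {..<N} \<in> Pi\<^sub>E {..<N} (\<lambda>n. {-c n..c n})"
      using t by (auto simp: abs_le_iff) (metis minus_le_iff)
    ultimately show "t \<in> (\<lambda>f n. if n < N then f n else 0) ` (Pi\<^sub>E {..<N} (\<lambda>n. {-c n..c n}))"
      by (rule image_eqI)
  qed
  then show ?thesis by (rule finite_subset) (intro finite_imageI finite_PiE, auto)
qed

lemma badS:
  fixes c a :: int
  assumes c: "0 \<le> c" and a: "a = 2^n * (2*c+1)"
  shows "real (card ({0..a} \<inter> - {c..a-c})) / real (card {0..a}) \<le> (1/2::real)^n"
proof -
  have "{0..a} \<inter> - {c..a-c} \<subseteq> {0..c-1} \<union> {a-c+1..a}" by auto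
  then have "card ({0..a} \<inter> - {c..a-c}) \<le> card ({0..c-1} \<union> {a-c+1..a})"
    by (intro card_mono) auto
  also have "\<dots> \<le> card {0..c-1} + card {a-c+1..a}" by (rule card_Un_le)
  also have "\<dots> = nat c + nat c" by simp
  finally have X: "real (card ({0..a} \<inter> - {c..a-c})) \<le> 2 * real_of_int c" using c by linarith
  have pa: "(0::int) \<le> a" using a c by simp
  have ca: "real (card {0..a}) = real_of_int a + 1" using pa by simp
  have p2: "(2::real)^n \<ge> 1" by simp
  have aa: "real_of_int a = 2^n * (2 * real_of_int c + 1)" using a by simp
  have "2 * real_of_int c * 2^n \<le> real_of_int a + 1" using aa c p2 by (simp add: algebra_simps)
  then have "2 * real_of_int c / (real_of_int a + 1) \<le> 1 / 2^n"
    using pa by (simp add: divide_simps)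
  then show ?thesis using X ca pa
    by (smt (verit, ccfv_SIG) divide_right_mono of_int_nonneg power_one_over)
qed

lemma core:
  fixes \<mu> :: "(nat \<Rightarrow> int) measure" and B :: "(nat \<Rightarrow> int) set"
  assumes P: "prob_space \<mu>" and S: "sets \<mu> = sets M0" and B: "B \<in> sets M0"
    and N: "\<And>x. emeasure \<mu> ((\<lambda>b. zadd b x) ` B) = 0"
  shows "\<exists>a. (\<forall>n. a n > 0) \<and> (\<forall>x. emeasure (mu a) ((\<lambda>b. zadd b x) ` B) = 0)"
proof -
  obtain c where c0: "\<forall>n. 0 \<le> c n" and Kp: "emeasure \<mu> {y. \<forall>n. \<bar>y n\<bar> \<le> c n} > 0"
    using tight[OF P S] by blast
  define K where "K = {y::nat\<Rightarrow>int. \<forall>n. \<bar>y n\<bar> \<le> c n}"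
  define a where "a n = 2^n * (2 * c n + 1)" for n
  have apos: "a n > 0" for n using c0 by (simp add: a_def)
  have a2c: "2 * c n \<le> a n" for n
  proof -
    have "(1::int) \<le> 2^n" by simp
    then have "1 * (2 * c n + 1) \<le> 2^n * (2 * c n + 1)" using c0 by (intro mult_right_mono) auto
    then show ?thesis by (simp add: a_def)
  qed
  have Km: "K \<in> sets \<mu>" using sets_allcoord S by (simp add: K_def)
  have Kpos: "K \<notin> null_sets \<mu>" using Kp by (auto simp: K_def)
  define SS where "SS = Sset c a"
  have SSm: "SS \<in> sets M0" unfolding SS_def Sset_def by (rule sets_allcoord)
  show ?thesis
  proof (intro exI conjI allI)
    show "0 < a n" for n by (rule apos)
    fix x
    define E where "E = (\<lambda>b. zadd b x) ` B"
    have Em: "E \<in> sets M0" unfolding E_def by (rule sets_img[OF B])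
    have piece: "E \<inter> (\<lambda>z. zadd z t) ` SS \<in> null_sets (mu a)" if t: "\<And>n. \<bar>t n\<bar> \<le> c n" for t
    proof -
      define x' where "x' = (\<lambda>n. x n - t n)"
      let ?C = "(\<lambda>b. zadd b x') ` B"
      have Cm: "?C \<in> sets M0" by (rule sets_img[OF B])
      have Ct: "(\<lambda>b. zadd b v) ` ?C = (\<lambda>b. zadd b (zadd x' v)) ` B" for v
        by (simp add: image_image zadd_def add.assoc)
      have AE: "AE y in \<mu>. emeasure (mu a) {z. zadd y z \<in> ?C} = 0"
        by (rule fub[OF P S Cm]) (simp add: Ct N)
      have "\<exists>y\<in>K. emeasure (mu a) {z. zadd y z \<in> ?C} = 0"
      proof (rule ccontr)
        assume "\<not> ?thesis"
        then have "AE y in \<mu>. y \<notin> K" using AE by (auto elim: AE_mp)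
        then have "K \<in> null_sets \<mu>" using AE_iff_null_sets[OF Km] by simp
        with Kpos show False by simp
      qed
      then obtain y where yK: "y \<in> K" and y0: "emeasure (mu a) {z. zadd y z \<in> ?C} = 0" by blast
      define A where "A = {w \<in> SS. zadd w t \<in> E}"
      have "(\<lambda>w. zadd w t) -` E \<inter> space M0 \<in> sets M0"
        by (rule measurable_sets[OF meas_transl Em])
      moreover have "A = SS \<inter> ((\<lambda>w. zadd w t) -` E \<inter> space M0)" by (auto simp: A_def)
      ultimately have Am: "A \<in> sets M0" using SSm by (metis sets.Int)
      have AS: "A \<subseteq> Sset c a" by (auto simp: A_def SS_def)
      have cy: "\<And>n. \<bar>(\<lambda>n. - y n) n\<bar> \<le> c n" using yK by (simp add: K_def)
      have a0: "\<And>n. 0 \<le> a n" using apos less_imp_le by blast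
      have m1: "emeasure (mu a) ((\<lambda>z. zadd z t) ` A) = emeasure (mu a) A"
        by (rule shift[OF a0 t Am AS])
      have m2: "emeasure (mu a) ((\<lambda>z. zadd z (\<lambda>n. - y n)) ` A) = emeasure (mu a) A"
        by (rule shift[OF a0 cy Am AS])
      have sub: "(\<lambda>z. zadd z (\<lambda>n. - y n)) ` A \<subseteq> {z. zadd y z \<in> ?C}"
      proof
        fix z assume "z \<in> (\<lambda>z. zadd z (\<lambda>n. - y n)) ` A"
        then obtain w where w: "w \<in> A" "z = zadd w (\<lambda>n. - y n)" by auto
        then obtain b where b: "b \<in> B" "zadd w t = zadd b x" by (auto simp: A_def E_def)
        have bn: "w n + t n = b n + x n" for n using b(2) by (simp add: zadd_def fun_eq_iff)
        have "zadd y z = zadd b x'"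
          using bn w(2) by (auto simp: zadd_def x'_def fun_eq_iff algebra_simps)
        then show "z \<in> {z. zadd y z \<in> ?C}" using b(1) by auto
      qed
      have Geq: "{z. zadd y z \<in> ?C} = (\<lambda>z. zadd z y) -` ?C \<inter> space M0"
        by (auto simp: zadd_comm)
      have Gm: "{z. zadd y z \<in> ?C} \<in> sets (mu a)"
        unfolding Geq sets_mu by (rule measurable_sets[OF meas_transl Cm])
      have "emeasure (mu a) A = emeasure (mu a) ((\<lambda>z. zadd z (\<lambda>n. - y n)) ` A)" using m2 by simp
      also have "\<dots> \<le> emeasure (mu a) {z. zadd y z \<in> ?C}" by (rule emeasure_mono[OF sub Gm])
      finally have A0: "emeasure (mu a) A = 0" using y0 by simp
      have eq: "E \<inter> (\<lambda>z. zadd z t) ` SS = (\<lambda>z. zadd z t) ` A" by (auto simp: A_def)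
      have "(\<lambda>z. zadd z t) ` A \<in> sets (mu a)" using sets_img[OF Am] sets_mu by simp
      then show ?thesis using m1 A0 eq by auto
    qed
    define T where "T N = {t::nat\<Rightarrow>int. (\<forall>n\<ge>N. t n = 0) \<and> (\<forall>n. \<bar>t n\<bar> \<le> c n)}" for N
    have U: "(\<Union>N. \<Union>t\<in>T N. E \<inter> (\<lambda>z. zadd z t) ` SS) \<in> null_sets (mu a)"
    proof (rule null_sets_UN)
      fix N show "(\<Union>t\<in>T N. E \<inter> (\<lambda>z. zadd z t) ` SS) \<in> null_sets (mu a)"
      proof (rule null_sets_UN')
        show "countable (T N)" unfolding T_def by (rule countable_finite[OF Tfin])
        show "\<And>t. t \<in> T N \<Longrightarrow> E \<inter> (\<lambda>z. zadd z t) ` SS \<in> null_sets (mu a)"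
          using piece by (auto simp: T_def)
      qed
    qed
    interpret ma: prob_space "mu a" by (rule prob_mu)
    define Bd where "Bd n = {z::nat\<Rightarrow>int. z n \<in> - {c n..a n - c n}}" for n
    have Bd_m: "Bd n \<in> sets (mu a)" for n using sets_coord sets_mu by (simp add: Bd_def)
    have Bd_meas: "measure (mu a) (Bd n) \<le> (1/2)^n" for n
    proof -
      have a0: "0 \<le> a n" using apos[of n] by simp
      have "emeasure (mu a) (Bd n) = real (card ({0..a n} \<inter> - {c n..a n - c n})) / real (card {0..a n})"
        unfolding Bd_def by (rule coord_emeasure[where a=a and n=n, OF a0])
      then have "measure (mu a) (Bd n) = real (card ({0..a n} \<inter> - {c n..a n - c n})) / real (card {0..a n})"
        by (simp add: ma.emeasure_eq_measure)
      also have "\<dots> \<le> (1/2)^n" by (rule badS) (use c0 a_def in auto)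
      finally show ?thesis .
    qed
    have L: "limsup Bd \<in> null_sets (mu a)"
    proof (rule borel_cantelli_limsup1)
      show "\<And>n. Bd n \<in> sets (mu a)" by (rule Bd_m)
      show "\<And>n. emeasure (mu a) (Bd n) < \<infinity>" by (simp add: ma.emeasure_eq_measure)
      show "summable (\<lambda>n. measure (mu a) (Bd n))"
        by (rule summable_comparison_test'[of "\<lambda>n. (1/2::real)^n" 0]) (use Bd_meas in auto)
    qed
    define Z where "Z n = {z::nat\<Rightarrow>int. z n \<in> - {0..a n}}" for n
    have Z: "(\<Union>n. Z n) \<in> null_sets (mu a)"
    proof (rule null_sets_UN)
      fix n
      have a0: "0 \<le> a n" using apos[of n] by simp
      have "emeasure (mu a) (Z n) = real (card ({0..a n} \<inter> - {0..a n})) / real (card {0..a n})"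
        unfolding Z_def by (rule coord_emeasure[where a=a and n=n, OF a0])
      then have "emeasure (mu a) (Z n) = 0" by simp
      moreover have "Z n \<in> sets (mu a)" using sets_coord sets_mu by (simp add: Z_def)
      ultimately show "Z n \<in> null_sets (mu a)" by auto
    qed
    have cover: "E \<subseteq> (\<Union>n. Z n) \<union> limsup Bd \<union> (\<Union>N. \<Union>t\<in>T N. E \<inter> (\<lambda>z. zadd z t) ` SS)"
    proof
      fix z assume zE: "z \<in> E"
      show "z \<in> (\<Union>n. Z n) \<union> limsup Bd \<union> (\<Union>N. \<Union>t\<in>T N. E \<inter> (\<lambda>z. zadd z t) ` SS)"
      proof (cases "z \<in> (\<Union>n. Z n) \<union> limsup Bd")
        case True then show ?thesis by blast
      next
        case False
        then have z0: "\<And>n. 0 \<le> z n \<and> z n \<le> a n" and zl: "z \<notin> limsup Bd" by (auto simp: Z_def)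
        have "\<exists>N. \<forall>n\<ge>N. z \<notin> Bd n" using zl by (auto simp: limsup_INF_SUP)
        then obtain N where NN: "\<And>n. n \<ge> N \<Longrightarrow> c n \<le> z n \<and> z n \<le> a n - c n"
          by (auto simp: Bd_def)
        define w where "w n = max (c n) (min (a n - c n) (z n))" for n
        define t where "t n = z n - w n" for n
        have tT: "t \<in> T N"
        proof -
          have "t n = 0" if "n \<ge> N" for n using NN[OF that] by (simp add: t_def w_def)
          moreover have "\<bar>t n\<bar> \<le> c n" for n
            using z0[of n] a2c[of n] c0 by (auto simp: t_def w_def abs_le_iff max_def min_def)
          ultimately show ?thesis by (simp add: T_def)
        qed
        have wS: "w \<in> SS" using a2c c0 by (auto simp: SS_def Sset_def w_def)
        have "z = zadd w t" by (simp add: zadd_def t_def fun_eq_iff)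
        then have "z \<in> E \<inter> (\<lambda>z. zadd z t) ` SS" using zE wS by auto
        then show ?thesis using tT by blast
      qed
    qed
    have "(\<Union>n. Z n) \<union> limsup Bd \<union> (\<Union>N. \<Union>t\<in>T N. E \<inter> (\<lambda>z. zadd z t) ` SS) \<in> null_sets (mu a)"
      using Z L U by (intro null_sets.Un)
    then have "E \<in> null_sets (mu a)" by (rule null_sets_subset) (use Em sets_mu cover in auto)
    then show "emeasure (mu a) ((\<lambda>b. zadd b x) ` B) = 0" by (auto simp: E_def)
  qed
qed


theorem theorem3p1:
  fixes B :: "(nat \<Rightarrow> int) set"
  assumes "B \<in> sets borel"
  shows "haar_null B \<longleftrightarrow>
    (\<exists>a::nat \<Rightarrow> int. (\<forall>n. a n > 0) \<and>
       (\<forall>x. emeasure (mu a) ((\<lambda>b. zadd b x) ` B) = 0))"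
proof
  assume "haar_null B"
  then obtain B' \<mu> where B'm: "B' \<in> sets borel" and BB: "B \<subseteq> B'" and P: "prob_space \<mu>"
    and S: "sets \<mu> = sets borel" and H: "\<forall>g h. emeasure \<mu> ((\<lambda>b. zadd (zadd g b) h) ` B') = 0"
    unfolding haar_null_def by blast
  have N: "emeasure \<mu> ((\<lambda>b. zadd b x) ` B') = 0" for x
  proof -
    have "(\<lambda>b. zadd (zadd (\<lambda>_. 0) b) x) = (\<lambda>b. zadd b x)" by (simp add: zadd_def)
    then show ?thesis using H by metis
  qed
  have S0: "sets \<mu> = sets M0" using S sets_borel_M0 by simp
  have B'0: "B' \<in> sets M0" using B'm sets_borel_M0 by simp
  obtain a where apos: "\<forall>n. a n > 0" and Z: "\<forall>x. emeasure (mu a) ((\<lambda>b. zadd b x) ` B') = 0"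
    using core[OF P S0 B'0 N] by blast
  have "emeasure (mu a) ((\<lambda>b. zadd b x) ` B) = 0" for x
  proof -
    have "emeasure (mu a) ((\<lambda>b. zadd b x) ` B) \<le> emeasure (mu a) ((\<lambda>b. zadd b x) ` B')"
      by (rule emeasure_mono) (use BB sets_img[OF B'0] sets_mu in auto)
    then show ?thesis using Z by simp
  qed
  then show "\<exists>a::nat \<Rightarrow> int. (\<forall>n. a n > 0) \<and> (\<forall>x. emeasure (mu a) ((\<lambda>b. zadd b x) ` B) = 0)"
    using apos by blast
next
  assume "\<exists>a::nat \<Rightarrow> int. (\<forall>n. a n > 0) \<and> (\<forall>x. emeasure (mu a) ((\<lambda>b. zadd b x) ` B) = 0)"
  then obtain a where Z: "\<forall>x. emeasure (mu a) ((\<lambda>b. zadd b x) ` B) = 0" by blast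
  have H: "\<forall>g h. emeasure (mu a) ((\<lambda>b. zadd (zadd g b) h) ` B) = 0"
  proof (intro allI)
    fix g h
    have e: "(\<lambda>b. zadd (zadd g b) h) = (\<lambda>b. zadd b (zadd g h))" by (auto simp: zadd_def fun_eq_iff)
    show "emeasure (mu a) ((\<lambda>b. zadd (zadd g b) h) ` B) = 0" unfolding e by (rule Z[rule_format])
  qed
  have "sets (mu a) = sets borel" using sets_mu sets_borel_M0 by simp
  then show "haar_null B"
    unfolding haar_null_def using assms prob_mu[of a] H by blast
qed

end
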